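(* For any two Mori fiber primitive generating sets $A_{\mathrm f}\subset A$ and $A'_{\mathrm f}\subset A'$ in $N_{\mathbb{R}}$, there exists a finite sequence of elementary links connecting them.
   Context: $N\simeq\mathbb{Z}^d$, $N_{\mathbb{R}}=N\otimes\mathbb{R}$. A primitive generating set of a real vector space spanned by a lattice is a finite set of primitive lattice points whose nonnegative linear combinations give the whole space. A reduction $B\supset B'$: inclusion of primitive generating sets of the same space with $|B|=|B'|+1$. A fiber structure $A_{\mathrm f}\subset A$ ($A$ a primitive generating set): $A_{\mathrm f}\ne\emptyset$ is a primitive generating set of its linear span $L$ (lattice $N\cap L$) and $A_{\mathrm f}=L\cap A$; base $A_{\mathrm b}=\{\bar\pi(v):v\in A\setminus A_{\mathrm f}\}$ where $\pi:N\to N/(N\cap L)$ and $\bar\pi(v)$ is the primitive generator of $\mathbb{R}_{\ge0}\pi(v)$. Irreducible: $|A|=|A_{\mathrm f}|+|A_{\mathrm b}|$. Mori fiber structure (written $A_{\mathrm f}\subset_m A$): irreducible with $|A_{\mathrm f}|=\dim L+1$; such a pair is a Mori fiber primitive generating set. An elementary link between $A_{\mathrm f}\subset_m A$ and $A'_{\mathrm f}\subset_m A'$ is one of the following, or the same with the two pairs exchanged: (trivial) $A=A'$, $A_{\mathrm f}=A'_{\mathrm f}$; (I$_{\mathrm d}$) $A\supset A'$ a reduction, $A_{\mathrm f}=A'_{\mathrm f}$; (I$_{\mathrm m}$) a fiber structure $A''_{\mathrm f}\subset A''$ with $A''=A$, $A_{\mathrm f}\subset_m A''_{\mathrm f}$,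 $A''\supset A'$ and $A''_{\mathrm f}\supset A'_{\mathrm f}$ reductions; (II$_{\mathrm{irr}}$) a fiber structure $A''_{\mathrm f}\subset A''$ with $A''\supset A$, $A''\supset A'$, $A''_{\mathrm f}\supset A_{\mathrm f}$, $A''_{\mathrm f}\supset A'_{\mathrm f}$ all reductions; (II$_{\mathrm{ni}}$) a fiber structure $A''_{\mathrm f}\subset A''$ with $A''\supset A$, $A''\supset A'$ reductions and $A_{\mathrm f}=A''_{\mathrm f}=A'_{\mathrm f}$; (IV$_{\mathrm m}$) a fiber structure $A''_{\mathrm f}\subset A''$ with $A=A''=A'$, $A_{\mathrm f}\subset_m A''_{\mathrm f}$ and $A'_{\mathrm f}\subset_m A''_{\mathrm f}$. A sequence of elementary links connecting two Mori fiber primitive generating sets is a chain of Mori fiber primitive generating sets from one to the other in which consecutive members are related by an elementary link. *)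

theory Defs
  imports "HOL-Analysis.Analysis"
begin

text \<open>The lattice N = Z^d, realised inside N_R = real^'n (d = CARD('n)).\<close>
definition lattice_pts :: "(real^'n) set" where
  "lattice_pts = {x. \<forall>i. x $ i \<in> \<int>}"

text \<open>Primitive lattice point of N.  (For v in a subspace L, primitivity in N \<inter> L
  coincides with primitivity in N.)\<close>
definition primitive :: "real^'n \<Rightarrow> bool" where
  "primitive v \<longleftrightarrow> v \<in> lattice_pts \<and> v \<noteq> 0 \<and>
     \<not> (\<exists>w \<in> lattice_pts. \<exists>k::int. k \<ge> 2 \<and> v = of_int k *\<^sub>R w)"

definition pgs :: "(real^'n) set \<Rightarrow> (real^'n) set \<Rightarrow> bool" where
  "pgs V B \<longleftrightarrow> finite B \<and> (\<forall>b\<in>B. primitive b) \<and>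
     V = {(\<Sum>b\<in>B. c b *\<^sub>R b) | c. \<forall>b\<in>B. c b \<ge> 0}"

definition reduction :: "(real^'n) set \<Rightarrow> (real^'n) set \<Rightarrow> bool" where
  "reduction B B' \<longleftrightarrow> (\<exists>V. pgs V B \<and> pgs V B') \<and> B' \<subseteq> B \<and> card B = card B' + 1"

text \<open>The element pi(u) of the quotient lattice N/(N \<inter> L), represented as a coset of N \<inter> L in N.\<close>
definition qcoset :: "(real^'n) set \<Rightarrow> real^'n \<Rightarrow> (real^'n) set" where
  "qcoset L u = {w \<in> lattice_pts. w - u \<in> L}"

text \<open>bar_pi(v): the primitive generator of the ray R_{\<ge>0} pi(v) in N/(N \<inter> L).\<close>
definition bar_pi :: "(real^'n) set \<Rightarrow> real^'n \<Rightarrow> (real^'n) set" where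
  "bar_pi L v = (THE C. \<exists>u \<in> lattice_pts. C = qcoset L u
       \<and> (\<exists>t::real. t > 0 \<and> u - t *\<^sub>R v \<in> L)
       \<and> u \<notin> L
       \<and> \<not> (\<exists>u' \<in> lattice_pts. \<exists>k::int. k \<ge> 2 \<and> u - of_int k *\<^sub>R u' \<in> L))"

definition fiber_structure :: "(real^'n) set \<Rightarrow> (real^'n) set \<Rightarrow> bool" where
  "fiber_structure Af A \<longleftrightarrow> pgs (span A) A \<and> Af \<noteq> {} \<and> pgs (span Af) Af
     \<and> Af = span Af \<inter> A"

definition base :: "(real^'n) set \<Rightarrow> (real^'n) set \<Rightarrow> (real^'n) set set" where
  "base Af A = bar_pi (span Af) ` (A - Af)"

definition irreducible_fs :: "(real^'n) set \<Rightarrow> (real^'n) set \<Rightarrow> bool" where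
  "irreducible_fs Af A \<longleftrightarrow> fiber_structure Af A \<and> card A = card Af + card (base Af A)"

definition mori_fs :: "(real^'n) set \<Rightarrow> (real^'n) set \<Rightarrow> bool" where
  "mori_fs Af A \<longleftrightarrow> irreducible_fs Af A \<and> card Af = dim (span Af) + 1"

definition mori_fiber_pgs :: "(real^'n) set \<times> (real^'n) set \<Rightarrow> bool" where
  "mori_fiber_pgs P \<longleftrightarrow> pgs UNIV (snd P) \<and> mori_fs (fst P) (snd P)"

definition link_dir :: "(real^'n) set \<times> (real^'n) set \<Rightarrow> (real^'n) set \<times> (real^'n) set \<Rightarrow> bool" where
  "link_dir P P' \<longleftrightarrow> (case P of (Af, A) \<Rightarrow> case P' of (Af', A') \<Rightarrow>
      (A = A' \<and> Af = Af')
    \<or> (reduction A A' \<and> Af = Af')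
    \<or> (\<exists>Af''. fiber_structure Af'' A \<and> mori_fs Af Af'' \<and> reduction A A' \<and> reduction Af'' Af')
    \<or> (\<exists>A'' Af''. fiber_structure Af'' A'' \<and> reduction A'' A \<and> reduction A'' A'
         \<and> reduction Af'' Af \<and> reduction Af'' Af')
    \<or> (\<exists>A''. fiber_structure Af A'' \<and> reduction A'' A \<and> reduction A'' A' \<and> Af = Af')
    \<or> (A = A' \<and> (\<exists>Af''. fiber_structure Af'' A \<and> mori_fs Af Af'' \<and> mori_fs Af' Af'')))"

definition elementary_link :: "(real^'n) set \<times> (real^'n) set \<Rightarrow> (real^'n) set \<times> (real^'n) set \<Rightarrow> bool" where
  "elementary_link P P' \<longleftrightarrow> link_dir P P' \<or> link_dir P' P"

definition links_sequence :: "((real^'n) set \<times> (real^'n) set) list \<Rightarrow> bool" where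
  "links_sequence xs \<longleftrightarrow> xs \<noteq> [] \<and> (\<forall>P \<in> set xs. mori_fiber_pgs P)
     \<and> (\<forall>i. Suc i < length xs \<longrightarrow> elementary_link (xs ! i) (xs ! Suc i))"

end

theory Submission
  imports Defs
begin


definition pos :: "(real^'n) set \<Rightarrow> (real^'n) set" where
  "pos B = {(\<Sum>b\<in>B. c b *\<^sub>R b) | c. \<forall>b\<in>B. c b \<ge> 0}"

lemma pgs_pos: "pgs V B \<longleftrightarrow> finite B \<and> (\<forall>b\<in>B. primitive b) \<and> V = pos B"
  unfolding pgs_def pos_def by simp

lemma pos_0: "0 \<in> pos B"
  unfolding pos_def by (rule CollectI, rule exI[of _ "\<lambda>_. 0"]) simp

lemma pos_base: assumes "finite B" "x \<in> B" shows "x \<in> pos B"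
proof -
  have "(\<Sum>b\<in>B. (if b = x then 1 else 0) *\<^sub>R b) = (\<Sum>b\<in>B. if b = x then b else 0)"
    by (intro sum.cong) auto
  also have "\<dots> = x" using assms by (simp add: sum.delta)
  finally have "(\<Sum>b\<in>B. (if b = x then 1 else 0) *\<^sub>R b) = x" .
  then show ?thesis unfolding pos_def
    by (intro CollectI exI[of _ "\<lambda>b. if b = x then 1 else 0"]) auto
qed

lemma pos_add: assumes "x \<in> pos B" "y \<in> pos B" shows "x + y \<in> pos B"
proof -
  obtain c where c: "x = (\<Sum>b\<in>B. c b *\<^sub>R b)" "\<forall>b\<in>B. c b \<ge> 0" using assms(1) unfolding pos_def by auto
  obtain d where d: "y = (\<Sum>b\<in>B. d b *\<^sub>R b)" "\<forall>b\<in>B. d b \<ge> 0" using assms(2) unfolding pos_def by auto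
  have "x + y = (\<Sum>b\<in>B. (c b + d b) *\<^sub>R b)" by (simp add: c d scaleR_add_left sum.distrib)
  then show ?thesis unfolding pos_def using c d by (intro CollectI exI[of _ "\<lambda>b. c b + d b"]) auto
qed

lemma pos_scale: assumes "x \<in> pos B" "a \<ge> 0" shows "a *\<^sub>R x \<in> pos B"
proof -
  obtain c where c: "x = (\<Sum>b\<in>B. c b *\<^sub>R b)" "\<forall>b\<in>B. c b \<ge> 0" using assms(1) unfolding pos_def by auto
  have "a *\<^sub>R x = (\<Sum>b\<in>B. (a * c b) *\<^sub>R b)" by (simp add: c scaleR_sum_right)
  then show ?thesis unfolding pos_def using c assms(2) by (intro CollectI exI[of _ "\<lambda>b. a * c b"]) auto
qed

lemma pos_sum: assumes "finite Y" "Y \<subseteq> pos B" "\<forall>y\<in>Y. c y \<ge> 0"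
  shows "(\<Sum>y\<in>Y. c y *\<^sub>R y) \<in> pos B"
  using assms
proof (induction Y rule: finite_induct)
  case empty then show ?case by (simp add: pos_0)
next
  case (insert y Y)
  then show ?case by (simp add: pos_add pos_scale)
qed

lemma pos_trans: assumes "finite Y" "Y \<subseteq> pos B" shows "pos Y \<subseteq> pos B"
  using pos_sum[OF assms] unfolding pos_def[of Y] by blast

lemma pos_mono: assumes "finite X" "Y \<subseteq> X" shows "pos Y \<subseteq> pos X"
  using pos_trans[of Y X] assms pos_base[OF assms(1)] finite_subset by blast

lemma pos_span: "pos B \<subseteq> span B"
proof
  fix x assume "x \<in> pos B"
  then obtain c where "x = (\<Sum>b\<in>B. c b *\<^sub>R b)" unfolding pos_def by auto
  moreover have "(\<Sum>b\<in>B. c b *\<^sub>R b) \<in> span B"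
    by (rule span_sum) (simp add: span_base span_scale)
  ultimately show "x \<in> span B" by simp
qed


section \<open>Lattice\<close>

lemma lat_add: "x \<in> lattice_pts \<Longrightarrow> y \<in> lattice_pts \<Longrightarrow> x + y \<in> lattice_pts"
  unfolding lattice_pts_def by auto
lemma lat_diff: "x \<in> lattice_pts \<Longrightarrow> y \<in> lattice_pts \<Longrightarrow> x - y \<in> lattice_pts"
  unfolding lattice_pts_def by auto
lemma lat_minus: "x \<in> lattice_pts \<Longrightarrow> - x \<in> lattice_pts"
  unfolding lattice_pts_def by auto
lemma lat_0: "0 \<in> lattice_pts"
  unfolding lattice_pts_def by auto
lemma lat_scale: "x \<in> lattice_pts \<Longrightarrow> of_int k *\<^sub>R x \<in> lattice_pts"
  unfolding lattice_pts_def by auto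
lemma lat_sum: "(\<And>x. x \<in> S \<Longrightarrow> f x \<in> lattice_pts) \<Longrightarrow> sum f S \<in> lattice_pts"
  by (induction S rule: infinite_finite_induct) (auto intro: lat_add lat_0)
lemma lat_inner: "x \<in> lattice_pts \<Longrightarrow> y \<in> lattice_pts \<Longrightarrow> x \<bullet> y \<in> \<int>"
  unfolding lattice_pts_def by (auto simp: inner_vec_def inner_real_def intro!: Ints_sum Ints_mult)
lemma lat_axis: "axis i 1 \<in> lattice_pts"
  unfolding lattice_pts_def by (auto simp: axis_def)
lemma lat_Basis: "b \<in> Basis \<Longrightarrow> (b::real^'n) \<in> lattice_pts"
  by (auto simp: Basis_vec_def lat_axis)

lemma primitive_lat: "primitive v \<Longrightarrow> v \<in> lattice_pts" and primitive_nz: "primitive v \<Longrightarrow> v \<noteq> 0"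
  unfolding primitive_def by auto

lemma primitive_uminus: assumes "primitive v" shows "primitive (- v)"
  unfolding primitive_def
proof (intro conjI)
  show "- v \<in> lattice_pts" using assms by (simp add: primitive_def lat_minus)
  show "- v \<noteq> 0" using assms by (simp add: primitive_def)
  show "\<not> (\<exists>w\<in>lattice_pts. \<exists>k::int. 2 \<le> k \<and> - v = of_int k *\<^sub>R w)"
  proof
    assume "\<exists>w\<in>lattice_pts. \<exists>k::int. 2 \<le> k \<and> - v = of_int k *\<^sub>R w"
    then obtain w k where "w \<in> lattice_pts" "2 \<le> k" "- v = of_int k *\<^sub>R w" by auto
    then have "- w \<in> lattice_pts" "v = of_int k *\<^sub>R (- w)" by (auto simp: lat_minus) (metis minus_minus scaleR_minus_right)
    with \<open>2 \<le> k\<close> assms show False unfolding primitive_def by blast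
  qed
qed

lemma Ints_abs_ge1: "(x::real) \<in> \<int> \<Longrightarrow> x \<noteq> 0 \<Longrightarrow> 1 \<le> \<bar>x\<bar>"
proof -
  assume "x \<in> \<int>" "x \<noteq> 0"
  then obtain z where z: "x = of_int z" by (auto elim: Ints_cases)
  then have "z \<noteq> 0" using \<open>x \<noteq> 0\<close> by auto
  then have "1 \<le> \<bar>z\<bar>" by linarith
  then show ?thesis using z by (metis of_int_1_le_iff of_int_abs)
qed

lemma primitive_axis: "primitive (axis i (1::real))"
  unfolding primitive_def
proof (intro conjI)
  show "axis i 1 \<in> lattice_pts" by (rule lat_axis)
  show "axis i (1::real) \<noteq> 0" by (simp add: axis_eq_0_iff)
  show "\<not> (\<exists>w\<in>lattice_pts. \<exists>k::int. 2 \<le> k \<and> axis i 1 = of_int k *\<^sub>R w)"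
  proof
    assume "\<exists>w\<in>lattice_pts. \<exists>k::int. 2 \<le> k \<and> axis i 1 = of_int k *\<^sub>R w"
    then obtain w k where w: "w \<in> lattice_pts" "2 \<le> k" "axis i 1 = of_int k *\<^sub>R w" by auto
    then have "axis i 1 $ i = (of_int k *\<^sub>R w) $ i" by simp
    then have e: "1 = of_int k * w $ i" by simp
    have wi: "w $ i \<in> \<int>" using w(1) unfolding lattice_pts_def by auto
    have "w $ i \<noteq> 0" using e by auto
    then have "1 \<le> \<bar>w $ i\<bar>" using Ints_abs_ge1 wi by auto
    moreover have "(2::real) \<le> of_int k" using w(2) by simp
    ultimately have "2 * 1 \<le> of_int k * \<bar>w $ i\<bar>" by (intro mult_mono) auto
    then have "2 \<le> \<bar>of_int k * w $ i\<bar>" using w(2) by (simp add: abs_mult)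
    then show False using e by simp
  qed
qed

lemma lat_sumabs_ge1: assumes "x \<in> lattice_pts" "x \<noteq> 0" shows "1 \<le> (\<Sum>i\<in>UNIV. \<bar>x $ i\<bar>)"
proof -
  obtain i where "x $ i \<noteq> 0" using assms(2) by (metis vec_eq_iff zero_index)
  then have "1 \<le> \<bar>x $ i\<bar>" using assms(1) Ints_abs_ge1 unfolding lattice_pts_def by auto
  also have "\<dots> \<le> (\<Sum>i\<in>UNIV. \<bar>x $ i\<bar>)" by (rule member_le_sum) auto
  finally show ?thesis .
qed

lemma prim_reduce: assumes "x \<in> lattice_pts" "x \<noteq> 0"
  shows "\<exists>p (g::real). primitive p \<and> g > 0 \<and> x = g *\<^sub>R p"
  using assms
proof (induction "nat \<lfloor>\<Sum>i\<in>UNIV. \<bar>x $ i\<bar>\<rfloor>" arbitrary: x rule: less_induct)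
  case less
  show ?case
  proof (cases "primitive x")
    case True then show ?thesis by (intro exI[of _ x] exI[of _ 1]) auto
  next
    case False
    then obtain w and k :: int where w: "w \<in> lattice_pts" "2 \<le> k" "x = of_int k *\<^sub>R w"
      using less.prems unfolding primitive_def by auto
    have "w \<noteq> 0" using w less.prems by auto
    have sx: "(\<Sum>i\<in>UNIV. \<bar>x $ i\<bar>) = of_int k * (\<Sum>i\<in>UNIV. \<bar>w $ i\<bar>)"
      using w(2,3) by (simp add: abs_mult sum_distrib_left)
    have ints: "(\<Sum>i\<in>UNIV. \<bar>w $ i\<bar>) \<in> \<int>" using w(1) unfolding lattice_pts_def by (auto intro!: Ints_sum)
    then obtain z where z: "(\<Sum>i\<in>UNIV. \<bar>w $ i\<bar>) = of_int z" by (auto elim: Ints_cases)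
    have z1: "1 \<le> z" using lat_sumabs_ge1[OF w(1) \<open>w \<noteq> 0\<close>] z by simp
    have lt: "nat \<lfloor>\<Sum>i\<in>UNIV. \<bar>w $ i\<bar>\<rfloor> < nat \<lfloor>\<Sum>i\<in>UNIV. \<bar>x $ i\<bar>\<rfloor>"
    proof -
      have A0: "(\<Sum>i\<in>UNIV. \<bar>x $ i\<bar>) = real_of_int (k * z)" using sx z by simp
      have A: "\<lfloor>\<Sum>i\<in>UNIV. \<bar>x $ i\<bar>\<rfloor> = k * z" unfolding A0 by (rule floor_of_int)
      have B: "\<lfloor>\<Sum>i\<in>UNIV. \<bar>w $ i\<bar>\<rfloor> = z" using z by simp
      have "z < k * z" using z1 w(2) by (simp add: less_le_trans[of z "2*z"])
      then show ?thesis unfolding A B using z1 by simp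
    qed
    from less.hyps[OF lt w(1) \<open>w \<noteq> 0\<close>] obtain p g where "primitive p" "g > 0" "w = g *\<^sub>R p" by auto
    then have "x = (of_int k * g) *\<^sub>R p" using w(3) by simp
    moreover have "0 < of_int k * g" using w(2) \<open>g > 0\<close> by simp
    ultimately show ?thesis using \<open>primitive p\<close> by blast
  qed
qed



lemma det_Ints: assumes "\<And>i j. (A::real^'n^'n) $ i $ j \<in> \<int>" shows "det A \<in> \<int>"
  unfolding det_def using assms by (auto intro!: Ints_sum Ints_mult Ints_prod)

lemma orth_span: assumes "\<And>b. b \<in> S \<Longrightarrow> \<phi> \<bullet> b = 0" "x \<in> span S" shows "\<phi> \<bullet> (x::real^'n) = 0"
  using orthogonal_to_span[OF assms(2), of \<phi>] assms(1) unfolding orthogonal_def by auto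

lemma int_functional:
  fixes F :: "(real^'n) set"
  assumes "F \<subseteq> lattice_pts" "v \<in> lattice_pts" "v \<notin> span F"
  shows "\<exists>\<phi>. \<phi> \<in> lattice_pts \<and> (\<forall>a\<in>span F. \<phi> \<bullet> a = 0) \<and> \<phi> \<bullet> v \<noteq> 0"
proof -
  obtain F1 where F1: "F1 \<subseteq> F" "independent F1" "F \<subseteq> span F1"
    by (rule maximal_independent_subset)
  have spF: "span F1 = span F" using F1 by (metis span_mono span_span subset_antisym)
  have indI: "independent (insert v F1)" using F1(2) assms(3) spF by (simp add: independent_insertI)
  obtain Bs where Bs: "insert v F1 \<subseteq> Bs" "Bs \<subseteq> insert v F1 \<union> Basis" "independent Bs"
    "insert v F1 \<union> Basis \<subseteq> span Bs"
    using maximal_independent_subset_extend[OF _ indI, of "insert v F1 \<union> Basis"] by blast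
  have spBs: "span Bs = UNIV" using Bs(4) by (metis span_Basis span_mono span_span le_sup_iff top.extremum_uniqueI)
  have finBs: "finite Bs" using Bs(3) by (simp add: independent_imp_finite)
  have cardBs: "card Bs = CARD('n)"
    using basis_card_eq_dim[of Bs UNIV] Bs(3) spBs by simp
  have latBs: "Bs \<subseteq> lattice_pts" using Bs(2) F1(1) assms(1,2) lat_Basis by blast
  obtain \<beta> where \<beta>: "bij_betw \<beta> (UNIV::'n set) Bs"
    using finite_same_card_bij[of "UNIV::'n set" Bs] finBs cardBs by auto
  define M :: "real^'n^'n" where "M = (\<chi> i. \<beta> i)"
  have rowM: "row i M = \<beta> i" for i unfolding M_def row_def by (simp add: vec_lambda_eta)
  have "rows M = Bs" unfolding rows_def rowM using \<beta> by (auto simp: bij_betw_def)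
  then have "\<exists>B. B ** M = mat 1" using matrix_left_invertible_span_rows spBs by auto
  then have dM: "det M \<noteq> 0" using invertible_left_inverse invertible_det_nz by blast
  have imB: "\<beta> ` UNIV = Bs" using \<beta> by (simp add: bij_betw_def)
  obtain j where j: "\<beta> j = v" using imB Bs(1) by (metis insert_subset rangeE)
  define \<phi> :: "real^'n" where "\<phi> = (\<chi> k. det(\<chi> i l. if l = k then axis j 1 $ i else M$i$l))"
  have "M *v ((1 / det M) *\<^sub>R \<phi>) = axis j 1"
    using cramer[OF dM, of "(1 / det M) *\<^sub>R \<phi>" "axis j 1"] by (simp add: \<phi>_def vec_eq_iff)
  then have "M *v \<phi> = det M *\<^sub>R axis j 1" using dM
    by (metis (no_types, lifting) divide_self_if mult.commute scaleR_scaleR scaleR_one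
        times_divide_eq_right matrix_vector_mult_scaleR)
  moreover have Mi: "M $ i = \<beta> i" for i by (simp add: M_def)
  ultimately have comp: "\<beta> i \<bullet> \<phi> = (if i = j then det M else 0)" for i
    using matrix_vector_mul_component[of M \<phi> i] by (cases "i = j") (auto simp: axis_def)
  have latM: "M $ i $ l \<in> \<int>" for i l
    using latBs \<beta> unfolding M_def lattice_pts_def bij_betw_def by auto
  have "\<phi> $ k \<in> \<int>" for k
  proof -
    show ?thesis unfolding \<phi>_def vec_lambda_beta by (intro det_Ints) (simp add: latM axis_def)
  qed
  then have "\<phi> \<in> lattice_pts" unfolding lattice_pts_def by blast
  moreover have "\<phi> \<bullet> b = 0" if "b \<in> F1" for b
  proof -
    have "b \<in> \<beta> ` UNIV" using imB Bs(1) that by auto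
    then obtain i where i: "\<beta> i = b" by blast
    have "b \<noteq> v" using that assms(3) spF span_base by blast
    then have "i \<noteq> j" using i j by auto
    then show ?thesis using comp[of i] i by (simp add: inner_commute)
  qed
  then have "\<forall>a\<in>span F. \<phi> \<bullet> a = 0" using orth_span spF by blast
  moreover have "\<phi> \<bullet> v \<noteq> 0" using comp[of j] j dM by (simp add: inner_commute)
  ultimately show ?thesis by blast
qed



definition bp_pred :: "(real^'n) set \<Rightarrow> real^'n \<Rightarrow> (real^'n) set \<Rightarrow> bool" where
  "bp_pred L v C \<longleftrightarrow> (\<exists>u \<in> lattice_pts. C = qcoset L u
       \<and> (\<exists>t::real. t > 0 \<and> u - t *\<^sub>R v \<in> L)
       \<and> u \<notin> L
       \<and> \<not> (\<exists>u' \<in> lattice_pts. \<exists>k::int. k \<ge> 2 \<and> u - of_int k *\<^sub>R u' \<in> L))"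

lemma bar_pi_alt: "bar_pi L v = (THE C. bp_pred L v C)"
  unfolding bar_pi_def bp_pred_def by simp

lemma qcoset_eq: assumes "subspace L" "u - u' \<in> L" shows "qcoset L u = qcoset L u'"
proof -
  have "w - u \<in> L \<longleftrightarrow> w - u' \<in> L" for w
  proof
    assume "w - u \<in> L" then have "(w - u) + (u - u') \<in> L" using subspace_add assms by blast
    then show "w - u' \<in> L" by simp
  next
    assume "w - u' \<in> L" then have "(w - u') - (u - u') \<in> L" using subspace_diff assms by blast
    then show "w - u \<in> L" by simp
  qed
  then show ?thesis unfolding qcoset_def by auto
qed

lemma qcoset_mem: "u \<in> lattice_pts \<Longrightarrow> subspace L \<Longrightarrow> u \<in> qcoset L u"
  unfolding qcoset_def by (auto simp: subspace_0)

lemma bp_unique: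
  fixes F :: "(real^'n) set"
  assumes F: "F \<subseteq> lattice_pts" and v: "v \<in> lattice_pts" "v \<notin> span F"
  shows "\<exists>!C. bp_pred (span F) v C"
proof -
  define L where "L = span F"
  have sL: "subspace L" unfolding L_def by simp
  obtain \<phi> where \<phi>: "\<phi> \<in> lattice_pts" "\<forall>a\<in>L. \<phi> \<bullet> a = 0" "\<phi> \<bullet> v \<noteq> 0"
    using int_functional[OF F v] unfolding L_def by blast
  define a where "a = \<bar>\<phi> \<bullet> v\<bar>"
  have a0: "a > 0" using \<phi>(3) a_def by simp
  have ta: "t * a \<in> \<int>" if "u \<in> lattice_pts" "u - t *\<^sub>R v \<in> L" for u t
  proof -
    have "\<phi> \<bullet> (u - t *\<^sub>R v) = 0" using \<phi>(2) that(2) by blast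
    then have "\<phi> \<bullet> u = t * (\<phi> \<bullet> v)" by (simp add: inner_diff_right)
    moreover have "\<phi> \<bullet> u \<in> \<int>" using lat_inner[OF \<phi>(1) that(1)] .
    ultimately have "t * (\<phi> \<bullet> v) \<in> \<int>" by simp
    then show ?thesis unfolding a_def
      by (cases "\<phi> \<bullet> v \<ge> 0") (auto simp: abs_if Ints_minus[of "t * (\<phi> \<bullet> v)", simplified])
  qed
  define Gp where "Gp t \<longleftrightarrow> t > 0 \<and> (\<exists>u\<in>lattice_pts. u - t *\<^sub>R v \<in> L)" for t
  define Pn where "Pn n \<longleftrightarrow> n > 0 \<and> Gp (real n / a)" for n :: nat
  have GpPn: "\<exists>n. Pn n \<and> t = real n / a" if G: "Gp t" for t
  proof -
    obtain u where u: "u \<in> lattice_pts" "u - t *\<^sub>R v \<in> L" "t > 0" using G unfolding Gp_def by auto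
    obtain z where z: "t * a = of_int z" using ta[OF u(1,2)] by (auto elim: Ints_cases)
    have "z > 0" using z u(3) a0 by (metis mult_pos_pos of_int_0_less_iff)
    then have tn: "t = real (nat z) / a" using z a0 by (simp add: field_simps)
    then have "Pn (nat z)" unfolding Pn_def using \<open>z > 0\<close> G by simp
    then show ?thesis using tn by blast
  qed
  have "Gp 1" unfolding Gp_def using v(1) sL by (auto intro!: bexI[of _ v] simp: subspace_0)
  then obtain n1 where "Pn n1" using GpPn by blast
  define n0 where "n0 = (LEAST n. Pn n)"
  have Pn0: "Pn n0" unfolding n0_def using \<open>Pn n1\<close> by (rule LeastI)
  define t0 where "t0 = real n0 / a"
  have Gt0: "Gp t0" using Pn0 unfolding Pn_def t0_def by simp
  have t0pos: "t0 > 0" using Gt0 unfolding Gp_def by simp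
  have tmin: "t0 \<le> t" if G: "Gp t" for t
  proof -
    obtain n where n: "Pn n" "t = real n / a" using GpPn[OF G] by blast
    have "n0 \<le> n" unfolding n0_def using n(1) by (rule Least_le)
    then show ?thesis unfolding t0_def n(2) using a0 by (simp add: divide_right_mono)
  qed
  obtain u0 where u0: "u0 \<in> lattice_pts" "u0 - t0 *\<^sub>R v \<in> L" using Gt0 unfolding Gp_def by auto
  have vL: "v \<notin> L" using v(2) L_def by simp
  have ex: "bp_pred L v (qcoset L u0)"
    unfolding bp_pred_def
  proof (intro bexI[of _ u0] conjI)
    show "\<exists>t>0. u0 - t *\<^sub>R v \<in> L" using u0 t0pos by blast
    show "u0 \<notin> L"
    proof
      assume "u0 \<in> L"
      then have "u0 - (u0 - t0 *\<^sub>R v) \<in> L" using u0(2) sL subspace_diff by blast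
      then have "t0 *\<^sub>R v \<in> L" by simp
      then have "(1 / t0) *\<^sub>R (t0 *\<^sub>R v) \<in> L" using subspace_mul[OF sL] by blast
      then show False using vL t0pos by simp
    qed
    show "\<not> (\<exists>u'\<in>lattice_pts. \<exists>k::int. 2 \<le> k \<and> u0 - of_int k *\<^sub>R u' \<in> L)"
    proof
      assume "\<exists>u'\<in>lattice_pts. \<exists>k::int. 2 \<le> k \<and> u0 - of_int k *\<^sub>R u' \<in> L"
      then obtain u' and k :: int where k: "u' \<in> lattice_pts" "2 \<le> k" "u0 - of_int k *\<^sub>R u' \<in> L" by blast
      have "(1 / of_int k) *\<^sub>R ((u0 - t0 *\<^sub>R v) - (u0 - of_int k *\<^sub>R u')) \<in> L"
        using subspace_mul[OF sL subspace_diff[OF sL u0(2) k(3)]] .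
      moreover have "(1 / of_int k) *\<^sub>R ((u0 - t0 *\<^sub>R v) - (u0 - of_int k *\<^sub>R u')) = u' - (t0 / of_int k) *\<^sub>R v"
        using k(2) by (simp add: algebra_simps)
      ultimately have "Gp (t0 / of_int k)" unfolding Gp_def using k(1,2) t0pos by auto
      then have "t0 \<le> t0 / of_int k" by (rule tmin)
      moreover have "t0 / of_int k < t0" using k(2) t0pos by (simp add: divide_less_eq)
      ultimately show False by simp
    qed
  qed (use u0 in auto)
  have uniq: "C = qcoset L u0" if B: "bp_pred L v C" for C
  proof -
    obtain u t where u: "u \<in> lattice_pts" "C = qcoset L u" "t > 0" "u - t *\<^sub>R v \<in> L"
      and prim: "\<not> (\<exists>u'\<in>lattice_pts. \<exists>k::int. 2 \<le> k \<and> u - of_int k *\<^sub>R u' \<in> L)"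
      using B unfolding bp_pred_def by blast
    have "Gp t" unfolding Gp_def using u by auto
    then have tt0: "t0 \<le> t" by (rule tmin)
    define m where "m = \<lfloor>t / t0\<rfloor>"
    define r where "r = t - of_int m * t0"
    have "of_int m \<le> t / t0" "t / t0 < of_int m + 1" unfolding m_def by linarith+
    then have r0: "0 \<le> r" and rt0: "r < t0" unfolding r_def using t0pos by (simp_all add: field_simps)
    have m1: "1 \<le> m" unfolding m_def using tt0 t0pos by (simp add: le_floor_iff)
    have lat: "u - of_int m *\<^sub>R u0 \<in> lattice_pts" using u(1) u0(1) by (simp add: lat_diff lat_scale)
    have eq: "(u - of_int m *\<^sub>R u0) - r *\<^sub>R v = (u - t *\<^sub>R v) - of_int m *\<^sub>R (u0 - t0 *\<^sub>R v)"
      unfolding r_def by (simp add: algebra_simps)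
    have inL: "(u - of_int m *\<^sub>R u0) - r *\<^sub>R v \<in> L"
      unfolding eq using subspace_diff[OF sL u(4) subspace_mul[OF sL u0(2)]] .
    have "r = 0"
    proof (rule ccontr)
      assume "r \<noteq> 0"
      then have "Gp r" unfolding Gp_def using r0 lat inL by auto
      then show False using tmin rt0 by fastforce
    qed
    then have inL': "u - of_int m *\<^sub>R u0 \<in> L" using inL by simp
    have "m = 1"
    proof (rule ccontr)
      assume "m \<noteq> 1"
      then have "2 \<le> m" using m1 by simp
      then show False using prim inL' u0(1) by blast
    qed
    then have "u - u0 \<in> L" using inL' by simp
    then show ?thesis using u(2) qcoset_eq[OF sL] by simp
  qed
  show ?thesis unfolding L_def[symmetric] using ex uniq by blast
qed

lemma bar_pi_pred:
  fixes F :: "(real^'n) set"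
  assumes "F \<subseteq> lattice_pts" "v \<in> lattice_pts" "v \<notin> span F"
  shows "bp_pred (span F) v (bar_pi (span F) v)"
  unfolding bar_pi_alt using theI'[OF bp_unique[OF assms]] .

lemma bar_pi_eq:
  fixes F :: "(real^'n) set"
  assumes F: "F \<subseteq> lattice_pts" and x: "x \<in> lattice_pts" "x \<notin> span F"
    and y: "y \<in> lattice_pts" "y \<notin> span F"
    and eq: "bar_pi (span F) x = bar_pi (span F) y"
  shows "\<exists>s>0. x - s *\<^sub>R y \<in> span F"
proof -
  have sL: "subspace (span F)" by simp
  obtain u1 t1 where 1: "u1 \<in> lattice_pts" "bar_pi (span F) x = qcoset (span F) u1" "t1 > 0" "u1 - t1 *\<^sub>R x \<in> span F"
    using bar_pi_pred[OF F x] unfolding bp_pred_def by blast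
  obtain u2 t2 where 2: "u2 \<in> lattice_pts" "bar_pi (span F) y = qcoset (span F) u2" "t2 > 0" "u2 - t2 *\<^sub>R y \<in> span F"
    using bar_pi_pred[OF F y] unfolding bp_pred_def by blast
  have "u1 \<in> qcoset (span F) u2" using qcoset_mem[OF 1(1) sL] 1(2) 2(2) eq by simp
  then have d: "u1 - u2 \<in> span F" unfolding qcoset_def by simp
  have e: "x - (t2 / t1) *\<^sub>R y = (1 / t1) *\<^sub>R ((u2 - t2 *\<^sub>R y) + (u1 - u2) - (u1 - t1 *\<^sub>R x))"
    using 1(3) by (simp add: algebra_simps)
  have "(u2 - t2 *\<^sub>R y) + (u1 - u2) \<in> span F" using span_add[OF 2(4) d] .
  from span_diff[OF this 1(4)] have "x - (t2 / t1) *\<^sub>R y \<in> span F" unfolding e by (rule span_scale)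
  then show ?thesis using 1(3) 2(3) by (intro exI[of _ "t2 / t1"]) auto
qed



section \<open>Chains\<close>

lemma link_sym: "elementary_link P Q \<Longrightarrow> elementary_link Q P"
  unfolding elementary_link_def by blast

inductive cn :: "(real^'n) set \<times> (real^'n) set \<Rightarrow> (real^'n) set \<times> (real^'n) set \<Rightarrow> bool" where
  cn_refl: "mori_fiber_pgs P \<Longrightarrow> cn P P"
| cn_step: "mori_fiber_pgs P \<Longrightarrow> elementary_link P Q \<Longrightarrow> cn Q R \<Longrightarrow> cn P R"

lemma cn_mori: "cn P Q \<Longrightarrow> mori_fiber_pgs P \<and> mori_fiber_pgs Q"
  by (induction rule: cn.induct) auto

lemma cn_trans: "cn P Q \<Longrightarrow> cn Q R \<Longrightarrow> cn P R"
  by (induction rule: cn.induct) (auto intro: cn_step)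

lemma cn_link: "mori_fiber_pgs P \<Longrightarrow> mori_fiber_pgs Q \<Longrightarrow> elementary_link P Q \<Longrightarrow> cn P Q"
  by (blast intro: cn_step cn_refl)

lemma cn_sym: "cn P Q \<Longrightarrow> cn Q P"
proof (induction rule: cn.induct)
  case (cn_refl P) then show ?case by (rule cn.cn_refl)
next
  case (cn_step P Q R)
  have "cn Q P" using cn_link[OF _ cn_step.hyps(1) link_sym[OF cn_step.hyps(2)]] cn_mori[OF cn_step.hyps(3)] by blast
  then show ?case using cn_trans[OF cn_step.IH] by blast
qed

lemma ls_single: "links_sequence [P] \<longleftrightarrow> mori_fiber_pgs P"
  unfolding links_sequence_def by auto

lemma ls_cons: "links_sequence (P # Q # xs) \<longleftrightarrow> mori_fiber_pgs P \<and> elementary_link P Q \<and> links_sequence (Q # xs)"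
proof -
  have "(\<forall>i. Suc i < length (P # Q # xs) \<longrightarrow> elementary_link ((P # Q # xs) ! i) ((P # Q # xs) ! Suc i))
     \<longleftrightarrow> elementary_link P Q \<and> (\<forall>i. Suc i < length (Q # xs) \<longrightarrow> elementary_link ((Q # xs) ! i) ((Q # xs) ! Suc i))"
  proof safe
    assume H: "\<forall>i. Suc i < length (P # Q # xs) \<longrightarrow> elementary_link ((P # Q # xs) ! i) ((P # Q # xs) ! Suc i)"
    show "elementary_link P Q" using H[rule_format, of 0] by simp
    fix i assume "Suc i < length (Q # xs)"
    then show "elementary_link ((Q # xs) ! i) ((Q # xs) ! Suc i)" using H[rule_format, of "Suc i"] by simp
  next
    fix i
    assume H1: "elementary_link P Q" and H: "\<forall>i. Suc i < length (Q # xs) \<longrightarrow> elementary_link ((Q # xs) ! i) ((Q # xs) ! Suc i)"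
      and i: "Suc i < length (P # Q # xs)"
    show "elementary_link ((P # Q # xs) ! i) ((P # Q # xs) ! Suc i)"
    proof (cases i)
      case 0 then show ?thesis using H1 by simp
    next
      case (Suc j) then show ?thesis using H[rule_format, of j] i by simp
    qed
  qed
  then show ?thesis unfolding links_sequence_def by auto
qed

lemma cn_conn: "cn P Q \<Longrightarrow> \<exists>xs. links_sequence xs \<and> hd xs = P \<and> last xs = Q"
proof (induction rule: cn.induct)
  case (cn_refl P) then show ?case by (intro exI[of _ "[P]"]) (simp add: ls_single)
next
  case (cn_step P Q R)
  then obtain xs where xs: "links_sequence xs" "hd xs = Q" "last xs = R" by blast
  then obtain ys where ys: "xs = Q # ys" unfolding links_sequence_def by (cases xs) auto
  have "links_sequence (P # xs)" using xs(1) cn_step.hyps(1,2) unfolding ys by (simp add: ls_cons)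
  then show ?case using xs ys by (intro exI[of _ "P # xs"]) auto
qed

section \<open>Mori pairs\<close>

definition fok :: "(real^'n) set \<Rightarrow> bool" where
  "fok F \<longleftrightarrow> F \<noteq> {} \<and> finite F \<and> (\<forall>x\<in>F. primitive x) \<and> span F = pos F \<and> card F = dim (span F) + 1"

definition gd :: "(real^'n) set \<Rightarrow> (real^'n) set \<Rightarrow> bool" where
  "gd F X \<longleftrightarrow> finite X \<and> (\<forall>x\<in>X. primitive x) \<and> pos X = UNIV \<and> F = span F \<inter> X
     \<and> inj_on (bar_pi (span F)) (X - F)"

lemma pos_UNIV_span: "pos X = UNIV \<Longrightarrow> span X = UNIV"
  using pos_span by blast

lemma mori_iff: "mori_fiber_pgs (F, X) \<longleftrightarrow> fok F \<and> gd F X"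
proof
  assume M: "mori_fiber_pgs (F, X)"
  then have X: "finite X" "\<forall>x\<in>X. primitive x" "pos X = UNIV"
    unfolding mori_fiber_pgs_def pgs_pos by auto
  have fs: "fiber_structure F X" and c1: "card X = card F + card (base F X)" and c2: "card F = dim (span F) + 1"
    using M unfolding mori_fiber_pgs_def mori_fs_def irreducible_fs_def by auto
  have F: "F \<noteq> {}" "finite F" "\<forall>x\<in>F. primitive x" "span F = pos F" "F = span F \<inter> X"
    using fs unfolding fiber_structure_def pgs_pos by auto
  have sub: "F \<subseteq> X" using F(5) by blast
  have "card (X - F) = card X - card F" using card_Diff_subset[OF F(2) sub] .
  moreover have "card F \<le> card X" using card_mono[OF X(1) sub] .
  ultimately have "card (bar_pi (span F) ` (X - F)) = card (X - F)" using c1 unfolding base_def by simp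
  then have inj: "inj_on (bar_pi (span F)) (X - F)" using eq_card_imp_inj_on X(1) by blast
  have "fok F" unfolding fok_def using F c2 by blast
  moreover have "gd F X" unfolding gd_def using X F(5) inj by blast
  ultimately show "fok F \<and> gd F X" by blast
next
  assume "fok F \<and> gd F X"
  then have F: "F \<noteq> {}" "finite F" "\<forall>x\<in>F. primitive x" "span F = pos F" "card F = dim (span F) + 1"
    and X: "finite X" "\<forall>x\<in>X. primitive x" "pos X = UNIV" "F = span F \<inter> X" "inj_on (bar_pi (span F)) (X - F)"
    unfolding fok_def gd_def by blast+
  have sub: "F \<subseteq> X" using X(4) by blast
  have spX: "span X = UNIV" using pos_span[of X] X(3) by auto
  have "card (X - F) = card X - card F" using card_Diff_subset[OF F(2) sub] .
  moreover have "card F \<le> card X" using card_mono[OF X(1) sub] .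
  moreover have "card (bar_pi (span F) ` (X - F)) = card (X - F)" using card_image X(5) by blast
  ultimately have c1: "card X = card F + card (base F X)" unfolding base_def by simp
  have "fiber_structure F X" unfolding fiber_structure_def pgs_pos using F X spX by auto
  then show "mori_fiber_pgs (F, X)" unfolding mori_fiber_pgs_def mori_fs_def irreducible_fs_def pgs_pos
    using X c1 F(5) by auto
qed

lemma fs_self: assumes "finite X" "\<forall>x\<in>X. primitive x" "pos X = UNIV" shows "fiber_structure X X"
proof -
  have "span X = UNIV" using pos_span[of X] assms(3) by auto
  moreover have "X \<noteq> {}"
  proof
    assume "X = {}"
    then have "pos X = {0}" unfolding pos_def by auto
    moreover have "axis undefined (1::real) \<noteq> (0::real^'n)" by (simp add: axis_eq_0_iff)
    ultimately show False using assms(3) by (metis UNIV_I singletonD)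
  qed
  ultimately show ?thesis unfolding fiber_structure_def pgs_pos using assms by auto
qed

lemma fs_I: assumes "finite X" "\<forall>x\<in>X. primitive x" "pos X = UNIV" "fok F" "F = span F \<inter> X"
  shows "fiber_structure F X"
proof -
  have "span X = UNIV" using pos_span[of X] assms(3) by auto
  then show ?thesis unfolding fiber_structure_def pgs_pos using assms unfolding fok_def by auto
qed

lemma reduction_UNIV: assumes "finite A" "\<forall>x\<in>A. primitive x" "pos A = UNIV" "pos B = UNIV" "B \<subseteq> A"
  "card A = card B + 1" shows "reduction A B"
  unfolding reduction_def pgs_pos using assms finite_subset by blast

section \<open>Moves with fixed fiber\<close>

lemma fok_lat: "fok F \<Longrightarrow> F \<subseteq> lattice_pts"
  unfolding fok_def using primitive_lat by blast

lemma move_add: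
  assumes M: "mori_fiber_pgs (F, X)" and b: "primitive b" "b \<notin> span F"
    and nb: "bar_pi (span F) b \<notin> bar_pi (span F) ` (X - F)"
  shows "mori_fiber_pgs (F, insert b X) \<and> elementary_link (F, X) (F, insert b X)"
proof -
  have F: "fok F" and X: "gd F X" using M mori_iff by auto
  have Xd: "finite X" "\<forall>x\<in>X. primitive x" "pos X = UNIV" "F = span F \<inter> X" "inj_on (bar_pi (span F)) (X - F)"
    using X unfolding gd_def by auto
  have bX: "b \<notin> X"
  proof
    assume "b \<in> X"
    moreover have "b \<notin> F" using b(2) span_base by blast
    ultimately show False using nb by blast
  qed
  have pos: "pos (insert b X) = UNIV" using pos_mono[of "insert b X" X] Xd(1,3) by auto
  have "insert b X - F = insert b (X - F)" using b(2) span_base by blast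
  moreover have "X - F - {b} = X - F" using bX by blast
  ultimately have inj: "inj_on (bar_pi (span F)) (insert b X - F)" using Xd(5) nb by simp
  have "gd F (insert b X)" unfolding gd_def using Xd b pos inj by auto
  then have M2: "mori_fiber_pgs (F, insert b X)" using F mori_iff by blast
  have "reduction (insert b X) X"
    by (rule reduction_UNIV) (use Xd b bX pos in auto)
  then have "link_dir (F, insert b X) (F, X)" unfolding link_dir_def by simp
  then show ?thesis using M2 unfolding elementary_link_def by blast
qed

lemma move_remove:
  assumes M: "mori_fiber_pgs (F, X)" and w: "w \<in> X" "w \<notin> F" and pw: "pos (X - {w}) = UNIV"
  shows "mori_fiber_pgs (F, X - {w}) \<and> elementary_link (F, X) (F, X - {w})"
proof -
  have F: "fok F" and X: "gd F X" using M mori_iff by auto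
  have Xd: "finite X" "\<forall>x\<in>X. primitive x" "pos X = UNIV" "F = span F \<inter> X" "inj_on (bar_pi (span F)) (X - F)"
    using X unfolding gd_def by auto
  have "F = span F \<inter> (X - {w})" using Xd(4) w(2) by blast
  moreover have "inj_on (bar_pi (span F)) (X - {w} - F)" using Xd(5) by (rule inj_on_subset) blast
  ultimately have "gd F (X - {w})" unfolding gd_def using Xd pw by auto
  then have M2: "mori_fiber_pgs (F, X - {w})" using F mori_iff by blast
  have "card (X - {w}) = card X - 1" using Xd(1) w(1) by (simp add: card_Diff_singleton)
  moreover have "card X > 0" using Xd(1) w(1) card_gt_0_iff by blast
  ultimately have "card X = card (X - {w}) + 1" by simp
  then have "reduction X (X - {w})"
    by (intro reduction_UNIV) (use Xd pw in auto)
  then have "link_dir (F, X) (F, X - {w})" unfolding link_dir_def by simp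
  then show ?thesis using M2 unfolding elementary_link_def by blast
qed

lemma move_slide:
  assumes M: "mori_fiber_pgs (F, X)" and w: "w \<in> X" "w \<notin> F"
    and b: "primitive b" "b \<notin> X" "b \<notin> span F" and eq: "bar_pi (span F) b = bar_pi (span F) w"
  shows "mori_fiber_pgs (F, insert b (X - {w})) \<and> elementary_link (F, X) (F, insert b (X - {w}))"
proof -
  have F: "fok F" and X: "gd F X" using M mori_iff by auto
  have Xd: "finite X" "\<forall>x\<in>X. primitive x" "pos X = UNIV" "F = span F \<inter> X" "inj_on (bar_pi (span F)) (X - F)"
    using X unfolding gd_def by auto
  have Fd: "finite F" "span F = pos F" using F unfolding fok_def by auto
  define X' where "X' = insert b (X - {w})"
  have finX': "finite X'" using Xd(1) X'_def by simp
  have wlat: "w \<in> lattice_pts" "w \<notin> span F" using Xd(2,4) w primitive_lat by blast+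
  obtain s where s: "s > 0" "b - s *\<^sub>R w \<in> span F"
    using bar_pi_eq[OF fok_lat[OF F] primitive_lat[OF b(1)] b(3) wlat eq] by blast
  have FX': "F \<subseteq> X'" using Xd(4) w(2) X'_def by blast
  have "- (b - s *\<^sub>R w) \<in> pos F" using s(2) Fd(2) span_neg by (metis)
  then have m: "- (b - s *\<^sub>R w) \<in> pos X'" using pos_mono[OF finX' FX'] by blast
  have bb: "b \<in> pos X'" using pos_base[OF finX'] X'_def by simp
  have "(1 / s) *\<^sub>R (b + - (b - s *\<^sub>R w)) \<in> pos X'"
    by (rule pos_scale[OF pos_add[OF bb m]]) (use s(1) in simp)
  moreover have "(1 / s) *\<^sub>R (b + - (b - s *\<^sub>R w)) = w" using s(1) by (simp add: algebra_simps)
  ultimately have "w \<in> pos X'" by simp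
  then have "X \<subseteq> pos X'" using pos_base[OF finX'] X'_def by auto
  then have posX': "pos X' = UNIV" using pos_trans[OF Xd(1)] Xd(3) by blast
  have bF: "b \<notin> F" using b(3) span_base by blast
  have D: "X' - F = insert b ((X - F) - {w})" unfolding X'_def using bF by blast
  have "bar_pi (span F) b \<notin> bar_pi (span F) ` ((X - F) - {w})"
  proof
    assume "bar_pi (span F) b \<in> bar_pi (span F) ` ((X - F) - {w})"
    then obtain y where "y \<in> X - F" "y \<noteq> w" "bar_pi (span F) y = bar_pi (span F) w" using eq by auto
    then show False using Xd(5) w by (metis DiffI inj_onD)
  qed
  moreover have "X - F - {w} - {b} = X - F - {w}" using b(2) by blast
  ultimately have inj: "inj_on (bar_pi (span F)) (X' - F)" unfolding D using Xd(5)
    by (simp add: inj_on_subset[OF Xd(5)])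
  have "F = span F \<inter> X'" unfolding X'_def using Xd(4) b(3) w(2) by blast
  then have "gd F X'" unfolding gd_def using finX' Xd(2) b(1) posX' inj X'_def by auto
  then have M2: "mori_fiber_pgs (F, X')" using F mori_iff by blast
  have posbX: "pos (insert b X) = UNIV" using pos_mono[of "insert b X" X] Xd(1,3) by auto
  have fs: "fiber_structure F (insert b X)"
    by (rule fs_I) (use Xd b posbX F bF in auto)
  have r1: "reduction (insert b X) X" by (rule reduction_UNIV) (use Xd b posbX in auto)
  have "card (X - {w}) = card X - 1" using Xd(1) w(1) by (simp add: card_Diff_singleton)
  moreover have "card X > 0" using Xd(1) w(1) card_gt_0_iff by blast
  moreover have "card X' = card (X - {w}) + 1" unfolding X'_def using Xd(1) b(2) by simp
  moreover have "card (insert b X) = card X + 1" using Xd(1) b(2) by simp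
  ultimately have "card (insert b X) = card X' + 1" by simp
  then have r2: "reduction (insert b X) X'"
    by (intro reduction_UNIV) (use Xd b posbX posX' X'_def in auto)
  have "link_dir (F, X) (F, X')" unfolding link_dir_def using fs r1 r2 by auto
  then show ?thesis using M2 unfolding elementary_link_def X'_def by blast
qed

lemma fixed_fiber_conn:
  assumes "mori_fiber_pgs (F, X)" "mori_fiber_pgs (F, Y)"
  shows "cn (F, X) (F, Y)"
  using assms
proof (induction "card (Y - X) + card (X - Y)" arbitrary: X rule: less_induct)
  case less
  have F: "fok F" and X: "gd F X" and Y: "gd F Y" using less.prems mori_iff by auto
  have Xd: "finite X" "\<forall>x\<in>X. primitive x" "pos X = UNIV" "F = span F \<inter> X" "inj_on (bar_pi (span F)) (X - F)"
    using X unfolding gd_def by auto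
  have Yd: "finite Y" "\<forall>x\<in>Y. primitive x" "pos Y = UNIV" "F = span F \<inter> Y" "inj_on (bar_pi (span F)) (Y - F)"
    using Y unfolding gd_def by auto
  show ?case
  proof (cases "Y \<subseteq> X")
    case True
    show ?thesis
    proof (cases "X = Y")
      case True then show ?thesis using less.prems by (simp add: cn_refl)
    next
      case False
      then obtain w where w: "w \<in> X" "w \<notin> Y" using \<open>Y \<subseteq> X\<close> by blast
      have wF: "w \<notin> F" using w Yd(4) by blast
      have "pos (X - {w}) = UNIV" using pos_mono[of "X - {w}" Y] Xd(1) Yd(3) w True by auto
      from move_remove[OF less.prems(1) w(1) wF this]
      have M2: "mori_fiber_pgs (F, X - {w})" and L: "elementary_link (F, X) (F, X - {w})" by auto
      have "card (Y - (X - {w})) + card ((X - {w}) - Y) < card (Y - X) + card (X - Y)"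
      proof -
        have "Y - (X - {w}) = Y - X" using w by blast
        moreover have "(X - {w}) - Y = (X - Y) - {w}" by blast
        moreover have "card ((X - Y) - {w}) < card (X - Y)" using w Xd(1) by (intro card_Diff1_less) auto
        ultimately show ?thesis by simp
      qed
      from less.hyps[OF this M2 less.prems(2)] show ?thesis using cn_step[OF less.prems(1) L] by blast
    qed
  next
    case False
    then obtain b where b: "b \<in> Y" "b \<notin> X" by blast
    have bF: "b \<notin> F" using b Xd(4) by blast
    have bsp: "b \<notin> span F" using b(1) bF Yd(4) by blast
    have bp: "primitive b" using b Yd(2) by blast
    show ?thesis
    proof (cases "bar_pi (span F) b \<in> bar_pi (span F) ` (X - F)")
      case False
      from move_add[OF less.prems(1) bp bsp False]
      have M2: "mori_fiber_pgs (F, insert b X)" and L: "elementary_link (F, X) (F, insert b X)" by auto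
      have "card (Y - insert b X) + card (insert b X - Y) < card (Y - X) + card (X - Y)"
      proof -
        have "Y - insert b X = (Y - X) - {b}" by blast
        moreover have "insert b X - Y = X - Y" using b by blast
        moreover have "card ((Y - X) - {b}) < card (Y - X)" using b Yd(1) by (intro card_Diff1_less) auto
        ultimately show ?thesis by simp
      qed
      from less.hyps[OF this M2 less.prems(2)] show ?thesis using cn_step[OF less.prems(1) L] by blast
    next
      case True
      then obtain w where w: "w \<in> X - F" "bar_pi (span F) w = bar_pi (span F) b" by auto
      have wY: "w \<notin> Y"
      proof
        assume "w \<in> Y"
        then have "w \<in> Y - F" using w by blast
        moreover have "b \<in> Y - F" using b bF by blast
        ultimately have "w = b" using Yd(5) w(2) by (meson inj_onD)
        then show False using w b by blast
      qed
      from move_slide[OF less.prems(1) _ _ bp b(2) bsp w(2)[symmetric]] w(1)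
      have M2: "mori_fiber_pgs (F, insert b (X - {w}))" and L: "elementary_link (F, X) (F, insert b (X - {w}))"
        by auto
      have "card (Y - insert b (X - {w})) + card (insert b (X - {w}) - Y) < card (Y - X) + card (X - Y)"
      proof -
        have "Y - insert b (X - {w}) = (Y - X) - {b}" using wY by blast
        moreover have "insert b (X - {w}) - Y = (X - Y) - {w}" using b by blast
        moreover have "card ((Y - X) - {b}) < card (Y - X)" using b Yd(1) by (intro card_Diff1_less) auto
        moreover have "card ((X - Y) - {w}) < card (X - Y)" using w wY Xd(1) by (intro card_Diff1_less) auto
        ultimately show ?thesis by simp
      qed
      from less.hyps[OF this M2 less.prems(2)] show ?thesis using cn_step[OF less.prems(1) L] by blast
    qed
  qed
qed



section \<open>Simplices\<close>

definition smp :: "(real^'n) set \<Rightarrow> bool" where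
  "smp S \<longleftrightarrow> finite S \<and> (\<forall>x\<in>S. primitive x) \<and> pos S = UNIV \<and> card S = dim (span S) + 1"

lemma smp_iff: "smp (S::(real^'n) set) \<longleftrightarrow> finite S \<and> (\<forall>x\<in>S. primitive x) \<and> pos S = UNIV \<and> card S = CARD('n) + 1"
proof -
  have "pos S = UNIV \<Longrightarrow> dim (span S) = CARD('n)"
  proof -
    assume "pos S = UNIV"
    then have "span S = UNIV" using pos_span[of S] by auto
    then show "dim (span S) = CARD('n)" by simp
  qed
  then show ?thesis unfolding smp_def by auto
qed

lemma pos_nonneg_zero:
  assumes "pos S = UNIV" "\<forall>t\<in>S. n \<bullet> t \<ge> 0" shows "n = (0::real^'n)"
proof -
  have "- n \<in> pos S" using assms(1) by simp
  then obtain c where c: "- n = (\<Sum>t\<in>S. c t *\<^sub>R t)" "\<forall>t\<in>S. c t \<ge> 0" unfolding pos_def by auto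
  have "n \<bullet> (- n) = (\<Sum>t\<in>S. c t * (n \<bullet> t))" unfolding c(1) by (simp add: inner_sum_right)
  also have "\<dots> \<ge> 0" using c(2) assms(2) by (intro sum_nonneg) simp
  finally have "n \<bullet> n \<le> 0" by simp
  then have "n \<bullet> n = 0" using inner_ge_zero[of n] by linarith
  then show ?thesis by simp
qed

lemma simplex_G:
  fixes S :: "(real^'n) set"
  assumes S: "smp S" and b: "b \<in> S" "b' \<in> S" "b \<noteq> b'" and s: "s \<ge> 0"
    and Z: "Z \<subseteq> S - {b, b'}" and inZ: "b - s *\<^sub>R b' \<in> span Z"
  shows False
proof -
  have fin: "finite S" "pos S = UNIV" "card S = CARD('n) + 1" using S unfolding smp_iff by auto
  let ?R = "S - {b, b'}"
  have "card ?R = card S - 2" using fin(1) b by (simp add: card_Diff_subset)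
  then have "card ?R < CARD('n)" using fin(3) by simp
  moreover have "dim ?R \<le> card ?R" using dim_le_card[OF span_superset finite_Diff[OF fin(1)]] .
  ultimately have "dim ?R < DIM(real^'n)" by simp
  then obtain n where n: "n \<noteq> 0" "\<And>y. y \<in> span ?R \<Longrightarrow> orthogonal n y"
    using orthogonal_to_subspace_exists by blast
  have "b - s *\<^sub>R b' \<in> span ?R" using inZ span_mono[OF Z] by blast
  then have "n \<bullet> (b - s *\<^sub>R b') = 0" using n(2) orthogonal_def by blast
  then have nb: "n \<bullet> b = s * (n \<bullet> b')" by (simp add: inner_diff_right)
  define n' where "n' = (if n \<bullet> b' \<ge> 0 then n else - n)"
  have n'b': "n' \<bullet> b' \<ge> 0" by (cases "n \<bullet> b' \<ge> 0") (simp_all add: n'_def)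
  have n'b: "n' \<bullet> b = s * (n' \<bullet> b')" by (cases "n \<bullet> b' \<ge> 0") (simp_all add: n'_def nb)
  have "\<forall>t\<in>S. n' \<bullet> t \<ge> 0"
  proof
    fix t assume t: "t \<in> S"
    show "n' \<bullet> t \<ge> 0"
    proof (cases "t = b \<or> t = b'")
      case True
      have "s * (n' \<bullet> b') \<ge> 0" by (rule mult_nonneg_nonneg[OF s n'b'])
      show ?thesis
      proof (cases "t = b")
        case True then show ?thesis using n'b \<open>s * (n' \<bullet> b') \<ge> 0\<close> by simp
      next
        case False then have "t = b'" using \<open>t = b \<or> t = b'\<close> by blast
        then show ?thesis using n'b' by simp
      qed
    next
      case False
      then have "t \<in> ?R" using t by blast
      then have "t \<in> span ?R" by (rule span_base)
      then have "n \<bullet> t = 0" using n(2) unfolding orthogonal_def by blast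
      then show ?thesis by (simp add: n'_def)
    qed
  qed
  then have "n' = 0" using pos_nonneg_zero fin(2) by blast
  then show False using n(1) by (simp add: n'_def split: if_splits)
qed

lemma simplex_other: fixes S :: "(real^'n) set" assumes "smp S" "CARD('n) \<ge> 2" shows "\<exists>z\<in>S. z \<noteq> x \<and> z \<noteq> (y::real^'n)"
proof -
  have fin: "finite S" "card S = CARD('n) + 1" using assms unfolding smp_iff by auto
  have "card S - card {x, y} \<le> card (S - {x, y})" by (rule diff_card_le_card_Diff) simp
  moreover have "card {x, y} \<le> 2" by (simp add: card_insert_le_m1)
  ultimately have "card (S - {x, y}) > 0" using fin assms(2) by linarith
  then have "S - {x, y} \<noteq> {}" by (metis card.empty less_irrefl)
  then show ?thesis by blast
qed

lemma simplex_nonempty: "smp S \<Longrightarrow> S \<noteq> {}"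
  unfolding smp_iff by auto

lemma dim_UNIV_cart: "dim (UNIV :: (real^'n) set) = CARD('n)"
  by simp

lemma simplex_mori: fixes S :: "(real^'n) set" assumes "smp S" shows "mori_fiber_pgs (S, S)"
proof -
  have S: "finite S" "\<forall>x\<in>S. primitive x" "pos S = UNIV" "card S = CARD('n) + 1"
    using assms unfolding smp_iff by auto
  have sp: "span S = UNIV" using pos_span[of S] S(3) by auto
  have "fok S" unfolding fok_def using S sp simplex_nonempty[OF assms] by simp
  moreover have "gd S S" unfolding gd_def using S sp by simp
  ultimately show ?thesis using mori_iff by blast
qed

lemma mori_D: assumes "mori_fiber_pgs (F, A)"
  shows "finite A" "\<forall>x\<in>A. primitive x" "pos A = UNIV" "mori_fs F A"
  using assms unfolding mori_fiber_pgs_def pgs_pos by auto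

lemma link_M2: assumes "mori_fiber_pgs (F, A)" "mori_fiber_pgs (F', A)"
  shows "elementary_link (F, A) (F', A)"
proof -
  have "fiber_structure A A" using mori_D[OF assms(1)] by (intro fs_self) auto
  then have "link_dir (F, A) (F', A)" unfolding link_dir_def prod.case using mori_D(4)[OF assms(1)] mori_D(4)[OF assms(2)]
    by blast
  then show ?thesis unfolding elementary_link_def by blast
qed

lemma link_M3: fixes A :: "(real^'n) set" assumes M: "mori_fiber_pgs (F, A)" and c: "card A = CARD('n) + 2" and S: "S \<subseteq> A" "smp S"
  shows "cn (F, A) (S, S)"
proof -
  have A: "finite A" "\<forall>x\<in>A. primitive x" "pos A = UNIV" using mori_D[OF M] by auto
  have fs: "fiber_structure A A" using A by (intro fs_self) auto
  have "reduction A S" by (rule reduction_UNIV) (use A S c in \<open>auto simp: smp_iff\<close>)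
  then have "link_dir (F, A) (S, S)" unfolding link_dir_def prod.case using fs mori_D(4)[OF M] by blast
  then have "elementary_link (F, A) (S, S)" unfolding elementary_link_def by blast
  then show ?thesis using cn_link M simplex_mori[OF S(2)] by blast
qed



lemma neq_neg: assumes "(u::real^'n) \<noteq> 0" shows "u \<noteq> - u"
proof
  assume "u = - u"
  then have "(2::real) *\<^sub>R u = u + - u" by (metis scaleR_2)
  then have "(2::real) *\<^sub>R u = 0" by simp
  then show False using assms by simp
qed

lemma piv1:
  fixes S :: "(real^'n) set"
  assumes S: "smp S" and d: "CARD('n) \<ge> 2" and u: "u \<in> S"
  shows "- u \<notin> S \<and> mori_fiber_pgs ({u, - u}, insert (- u) S)"
proof -
  have Sd: "finite S" "\<forall>x\<in>S. primitive x" "pos S = UNIV" "card S = CARD('n) + 1"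
    using S smp_iff by auto
  have up: "primitive u" using Sd u by blast
  have u0: "u \<noteq> 0" using primitive_nz up .
  have uu: "u \<noteq> - u" using neq_neg u0 .
  define F where "F = {u, - u}"
  have Fsub: "F \<subseteq> span {u}" unfolding F_def by (auto intro: span_base span_neg)
  have SpanU: "span F \<subseteq> span {u}" by (rule span_minimal[OF Fsub subspace_span])
  have notin: "x \<notin> span F" if x: "x \<in> S" "x \<noteq> u" for x
  proof
    assume xin: "x \<in> span F"
    obtain b' where b': "b' \<in> S" "b' \<noteq> u" "b' \<noteq> x" using simplex_other[OF S d] by blast
    have "x - 0 *\<^sub>R b' \<in> span {u}" using xin SpanU by auto
    moreover have "{u} \<subseteq> S - {x, b'}" using u x b' by auto
    ultimately show False using simplex_G[OF S x(1) b'(1) b'(3)[symmetric], of 0 "{u}"] by auto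
  qed
  have negu: "- u \<notin> S"
  proof
    assume "- u \<in> S"
    moreover have "- u \<in> span F" unfolding F_def by (rule span_base) simp
    moreover have "- u \<noteq> u" using uu by simp
    ultimately show False using notin[of "- u"] by blast
  qed
  have "span F \<subseteq> pos F"
  proof
    fix x assume "x \<in> span F"
    then have "x \<in> span {u}" using SpanU by blast
    then obtain k where k: "x = k *\<^sub>R u" by (auto simp: span_singleton)
    have fin: "finite F" unfolding F_def by simp
    show "x \<in> pos F"
    proof (cases "k \<ge> 0")
      case True then show ?thesis using pos_scale[OF pos_base[OF fin, of u]] k unfolding F_def by auto
    next
      case False
      have "x = (- k) *\<^sub>R (- u)" using k by simp
      then show ?thesis using pos_scale[OF pos_base[OF fin, of "- u"], of "- k"] False unfolding F_def by auto
    qed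
  qed
  then have spF: "span F = pos F" using pos_span by blast
  have indu: "independent {u}" using u0 by (simp add: independent_insert)
  have "card {u} = dim F" by (rule basis_card_eq_dim) (use Fsub indu in \<open>auto simp: F_def\<close>)
  then have dimF: "dim (span F) = 1" by simp
  have cardF: "card F = 2" unfolding F_def using uu by simp
  have fokF: "fok F" unfolding fok_def using spF dimF cardF up primitive_uminus[OF up] unfolding F_def by auto
  define A where "A = insert (- u) S"
  have finA: "finite A" using Sd A_def by simp
  have primA: "\<forall>x\<in>A. primitive x" using Sd primitive_uminus[OF up] A_def by auto
  have posA: "pos A = UNIV" using pos_mono[OF finA, of S] Sd(3) A_def by auto
  have FA: "F = span F \<inter> A"
  proof
    show "F \<subseteq> span F \<inter> A" using span_superset[of F] u unfolding F_def A_def by auto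
    show "span F \<inter> A \<subseteq> F"
    proof
      fix x assume x: "x \<in> span F \<inter> A"
      show "x \<in> F"
      proof (cases "x = u \<or> x = - u")
        case True then show ?thesis unfolding F_def by auto
      next
        case False then have "x \<in> S" "x \<noteq> u" using x A_def by auto
        then show ?thesis using notin x by blast
      qed
    qed
  qed
  have AF: "A - F = S - {u}" unfolding A_def F_def using negu by auto
  have Flat: "F \<subseteq> lattice_pts" using fok_lat[OF fokF] .
  have "inj_on (bar_pi (span F)) (S - {u})"
  proof (rule inj_onI, rule ccontr)
    fix x y assume x: "x \<in> S - {u}" and y: "y \<in> S - {u}" and eq: "bar_pi (span F) x = bar_pi (span F) y"
      and ne: "x \<noteq> y"
    have xl: "x \<in> lattice_pts" "x \<notin> span F" using x Sd(2) primitive_lat notin by auto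
    have yl: "y \<in> lattice_pts" "y \<notin> span F" using y Sd(2) primitive_lat notin by auto
    obtain s where s: "s > 0" "x - s *\<^sub>R y \<in> span F" using bar_pi_eq[OF Flat xl yl eq] by blast
    have "x - s *\<^sub>R y \<in> span {u}" using s(2) SpanU by blast
    moreover have "{u} \<subseteq> S - {x, y}" using x y u by auto
    ultimately show False using simplex_G[OF S _ _ ne, of s "{u}"] x y s(1) by auto
  qed
  then have "gd F A" unfolding gd_def AF using finA primA posA FA by blast
  then show ?thesis using fokF mori_iff negu unfolding F_def A_def by blast
qed

lemma pivot:
  fixes S S' :: "(real^'n) set"
  assumes d: "CARD('n) \<ge> 2" and S: "smp S" and S': "smp S'" and u: "u \<in> S" and u': "u \<in> S' \<or> - u \<in> S'"
  shows "cn (S, S) (S', S')"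
proof -
  have cardS: "card S = CARD('n) + 1" "finite S" using S smp_iff by auto
  have cardS': "card S' = CARD('n) + 1" "finite S'" using S' smp_iff by auto
  from piv1[OF S d u] have n1: "- u \<notin> S" and M1: "mori_fiber_pgs ({u, - u}, insert (- u) S)" by auto
  have "card (insert (- u) S) = CARD('n) + 2" using cardS n1 by simp
  then have c1: "cn ({u, - u}, insert (- u) S) (S, S)" using link_M3[OF M1 _ _ S] by auto
  obtain A2 where M2: "mori_fiber_pgs ({u, - u}, A2)" and c2: "cn ({u, - u}, A2) (S', S')"
  proof (cases "u \<in> S'")
    case True
    from piv1[OF S' d True] have n2: "- u \<notin> S'" and M: "mori_fiber_pgs ({u, - u}, insert (- u) S')" by auto
    have "card (insert (- u) S') = CARD('n) + 2" using cardS' n2 by simp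
    then have "cn ({u, - u}, insert (- u) S') (S', S')" using link_M3[OF M _ _ S'] by auto
    then show ?thesis using that M by blast
  next
    case False
    then have mu: "- u \<in> S'" using u' by blast
    from piv1[OF S' d mu] have n2: "u \<notin> S'" and M: "mori_fiber_pgs ({- u, u}, insert u S')" by auto
    have eqF: "{- u, u} = {u, - u}" by auto
    have "card (insert u S') = CARD('n) + 2" using cardS' n2 by simp
    then have "cn ({u, - u}, insert u S') (S', S')" using link_M3[OF M _ _ S'] eqF by auto
    then show ?thesis using that M eqF by auto
  qed
  have "cn ({u, - u}, insert (- u) S) ({u, - u}, A2)" by (rule fixed_fiber_conn[OF M1 M2])
  then show ?thesis using cn_sym[OF c1] c2 cn_trans by blast
qed



lemma primitive_Basis: "b \<in> (Basis :: (real^'n) set) \<Longrightarrow> primitive b"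
  by (auto simp: Basis_vec_def primitive_axis)

lemma simp_of:
  fixes Bs :: "(real^'n) set"
  assumes ind: "independent Bs" and sp: "span Bs = UNIV" and pr: "\<forall>b\<in>Bs. primitive b"
  shows "\<exists>p. p \<notin> Bs \<and> smp (insert p Bs)"
proof -
  have fin: "finite Bs" using ind independent_imp_finite by blast
  have card: "card Bs = CARD('n)" using basis_card_eq_dim[of Bs UNIV] ind sp by simp
  have ne: "Bs \<noteq> {}" using card by auto
  have indE: "\<And>c. (\<Sum>v\<in>Bs. c v *\<^sub>R v) = 0 \<Longrightarrow> \<forall>v\<in>Bs. c v = 0"
    using ind unfolding independent_explicit by blast
  define q where "q = - (\<Sum>b\<in>Bs. b)"
  have ql: "q \<in> lattice_pts" unfolding q_def using pr primitive_lat by (intro lat_minus lat_sum) auto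
  have q0: "q \<noteq> 0"
  proof
    assume "q = 0"
    then have "(\<Sum>v\<in>Bs. (\<lambda>_. 1::real) v *\<^sub>R v) = 0" unfolding q_def by simp
    then have "\<forall>v\<in>Bs. (1::real) = 0" by (rule indE)
    then show False using ne by auto
  qed
  obtain p g where p: "primitive p" "g > 0" "q = g *\<^sub>R p" using prim_reduce[OF ql q0] by blast
  have pB: "p \<notin> Bs"
  proof
    assume pin: "p \<in> Bs"
    define c where "c v = 1 + (if v = p then g else 0)" for v
    have "(\<Sum>v\<in>Bs. c v *\<^sub>R v) = (\<Sum>v\<in>Bs. v + (if v = p then g *\<^sub>R v else 0))"
      unfolding c_def by (intro sum.cong) (auto simp: scaleR_add_left)
    also have "\<dots> = (\<Sum>v\<in>Bs. v) + g *\<^sub>R p" using fin pin by (simp add: sum.distrib sum.delta)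
    also have "\<dots> = 0"
    proof -
      have "g *\<^sub>R p = - (\<Sum>v\<in>Bs. v)" using p(3) q_def by simp
      then show ?thesis by simp
    qed
    finally have "c p = 0" using indE pin by blast
    then show False using p(2) unfolding c_def by simp
  qed
  have finI: "finite (insert p Bs)" using fin by simp
  have posI: "pos (insert p Bs) = UNIV"
  proof (intro set_eqI iffI)
    fix x :: "real^'n"
    have "x \<in> span Bs" using sp by simp
    then obtain u where u: "x = (\<Sum>v\<in>Bs. u v *\<^sub>R v)" using span_finite[OF fin] by auto
    define M where "M = (\<Sum>v\<in>Bs. \<bar>u v\<bar>)"
    have M0: "M \<ge> 0" unfolding M_def by (simp add: sum_nonneg)
    have uM: "u v + M \<ge> 0" if "v \<in> Bs" for v
    proof -
      have "\<bar>u v\<bar> \<le> M" unfolding M_def using fin that by (intro member_le_sum) auto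
      then show ?thesis by linarith
    qed
    define c where "c y = (if y = p then M * g else u y + M)" for y
    have "(\<Sum>y\<in>insert p Bs. c y *\<^sub>R y) = c p *\<^sub>R p + (\<Sum>y\<in>Bs. c y *\<^sub>R y)"
      using fin pB by simp
    also have "(\<Sum>y\<in>Bs. c y *\<^sub>R y) = (\<Sum>y\<in>Bs. u y *\<^sub>R y + M *\<^sub>R y)"
      unfolding c_def using pB by (intro sum.cong) (auto simp: scaleR_add_left)
    also have "\<dots> = x + M *\<^sub>R (\<Sum>y\<in>Bs. y)" by (simp add: sum.distrib u scaleR_sum_right)
    also have "c p *\<^sub>R p = M *\<^sub>R q" unfolding c_def p(3) by simp
    also have "M *\<^sub>R q + (x + M *\<^sub>R (\<Sum>y\<in>Bs. y)) = x" unfolding q_def by (simp add: scaleR_right.minus)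
    finally have "(\<Sum>y\<in>insert p Bs. c y *\<^sub>R y) = x" .
    moreover have "\<forall>y\<in>insert p Bs. c y \<ge> 0" unfolding c_def using M0 p(2) uM by auto
    ultimately show "x \<in> pos (insert p Bs)" unfolding pos_def by blast
  qed simp
  have "smp (insert p Bs)" unfolding smp_iff using finI posI card pB fin pr p(1) by auto
  then show ?thesis using pB by blast
qed

lemma mori_to_smp:
  fixes F A :: "(real^'n) set"
  assumes M: "mori_fiber_pgs (F, A)"
  shows "\<exists>S. smp S \<and> cn (F, A) (S, S)"
proof -
  have fokF: "fok F" and gdA: "gd F A" using M mori_iff by auto
  have Fd: "F \<noteq> {}" "finite F" "\<forall>x\<in>F. primitive x" "span F = pos F" "card F = dim (span F) + 1"
    using fokF unfolding fok_def by blast+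
  have Ad: "finite A" "\<forall>x\<in>A. primitive x" "pos A = UNIV" "F = span F \<inter> A"
    using gdA unfolding gd_def by blast+
  show ?thesis
  proof (cases "span F = UNIV")
    case True
    then have FA: "F = A" using Ad(4) by simp
    have "dim (span F) = CARD('n)" using True by simp
    then have "smp A" unfolding smp_iff using Ad Fd(5) FA by simp
    then show ?thesis using cn_refl[OF M] FA by blast
  next
    case False
    obtain f0 where f0: "f0 \<in> F" using Fd(1) by blast
    define F1 where "F1 = F - {f0}"
    have "- f0 \<in> span F" using f0 by (intro span_neg span_base)
    then have "- f0 \<in> pos F" using Fd(4) by simp
    then obtain c where c: "- f0 = (\<Sum>f\<in>F. c f *\<^sub>R f)" "\<forall>f\<in>F. c f \<ge> 0" unfolding pos_def by auto
    define \<sigma> where "\<sigma> = (\<Sum>f\<in>F1. c f *\<^sub>R f)"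
    have "(\<Sum>f\<in>F. c f *\<^sub>R f) = c f0 *\<^sub>R f0 + \<sigma>" unfolding F1_def \<sigma>_def using Fd(2) f0 by (simp add: sum.remove)
    then have e1: "- f0 = c f0 *\<^sub>R f0 + \<sigma>" using c(1) by simp
    have "(1 + c f0) *\<^sub>R f0 = f0 + c f0 *\<^sub>R f0" by (simp add: scaleR_add_left)
    also have "c f0 *\<^sub>R f0 = - f0 - \<sigma>" unfolding eq_diff_eq using e1 by simp
    also have "f0 + (- f0 - \<sigma>) = - \<sigma>" by simp
    finally have e2: "(1 + c f0) *\<^sub>R f0 = - \<sigma>" .
    have cpos: "1 + c f0 > 0" using c(2) f0 by (simp add: add_pos_nonneg)
    have "f0 = (1 / (1 + c f0)) *\<^sub>R (- \<sigma>)" using e2 cpos by (metis divide_self_if less_irrefl scaleR_one scaleR_scaleR times_divide_eq_left mult_1)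
    moreover have "- \<sigma> \<in> span F1" unfolding \<sigma>_def by (intro span_neg span_sum span_scale span_base)
    ultimately have f0s: "f0 \<in> span F1" by (metis span_scale)
    have FF1: "F = insert f0 F1" unfolding F1_def using f0 by blast
    have spF1: "span F1 = span F"
    proof
      show "span F1 \<subseteq> span F" unfolding F1_def by (rule span_mono) blast
      have "F \<subseteq> span F1" using FF1 f0s span_superset by blast
      then show "span F \<subseteq> span F1" by (rule span_minimal) simp
    qed
    have finF1: "finite F1" using Fd(2) F1_def by simp
    have cardF1: "card F1 = dim (span F)" unfolding F1_def using Fd(2,5) f0 by (simp add: card_Diff_singleton)
    have indF1: "independent F1"
      using card_eq_dim[of F1 "span F1"] span_superset[of F1] cardF1 spF1 finF1 by simp
    obtain Bs where Bs: "F1 \<subseteq> Bs" "Bs \<subseteq> F1 \<union> Basis" "independent Bs" "F1 \<union> Basis \<subseteq> span Bs"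
      using maximal_independent_subset_extend[OF _ indF1, of "F1 \<union> Basis"] by blast
    have spBs: "span Bs = UNIV" using Bs(4) by (metis span_Basis span_mono span_span le_sup_iff top.extremum_uniqueI)
    have prBs: "\<forall>b\<in>Bs. primitive b" using Bs(2) Fd(3) primitive_Basis F1_def by blast
    have ex: "\<exists>p. p \<notin> Bs \<and> smp (insert p Bs)" by (rule simp_of[OF Bs(3) spBs prBs])
    then obtain p where pB: "p \<notin> Bs" and Sm: "smp (insert p Bs)" by blast
    define S where "S = insert p Bs"
    have S: "smp S" unfolding S_def by (rule Sm)
    have Sd: "finite S" "\<forall>x\<in>S. primitive x" "pos S = UNIV" "card S = CARD('n) + 1"
      using S unfolding smp_iff by blast+
    have "dim (span F) \<noteq> CARD('n)" using False dim_eq_full[of F] by simp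
    moreover have "dim (span F) \<le> CARD('n)" using dim_subset_UNIV_cart by blast
    ultimately have kd: "card F1 < CARD('n)" using cardF1 by simp
    define R where "R = S - F1"
    have F1S: "F1 \<subseteq> S" using Bs(1) S_def by blast
    have cardR: "card R = card S - card F1" unfolding R_def using card_Diff_subset[OF finF1 F1S] .
    have Rnot: "b \<notin> span F" if b: "b \<in> R" for b
    proof
      assume bsp: "b \<in> span F"
      have "card (R - {b}) = card R - 1" using b by (simp add: card_Diff_singleton)
      then have "card (R - {b}) > 0" using cardR Sd(4) kd by simp
      then obtain b' where b': "b' \<in> R" "b' \<noteq> b" by (metis card.empty all_not_in_conv less_irrefl DiffE insertI1)
      have "b - 0 *\<^sub>R b' \<in> span F1" using bsp spF1 by simp
      moreover have "F1 \<subseteq> S - {b, b'}" using F1S b b' R_def by blast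
      ultimately show False using simplex_G[OF S, of b b' 0 F1] b b' R_def by auto
    qed
    have f0S: "f0 \<notin> S"
    proof
      assume "f0 \<in> S"
      moreover have "f0 \<notin> F1" unfolding F1_def by simp
      ultimately have "f0 \<in> R" unfolding R_def by simp
      then show False using Rnot f0 span_base by blast
    qed
    define A' where "A' = insert f0 S"
    have FA': "F \<subseteq> A'" unfolding A'_def FF1 using F1S by blast
    have AF: "A' - F = R" unfolding A'_def R_def FF1 using f0S by blast
    have finA': "finite A'" using Sd A'_def by simp
    have primA': "\<forall>x\<in>A'. primitive x" using Sd Fd(3) f0 A'_def by auto
    have posA': "pos A' = UNIV" using pos_mono[OF finA', of S] Sd(3) A'_def by auto
    have eqA': "F = span F \<inter> A'"
    proof
      show "F \<subseteq> span F \<inter> A'" using span_superset[of F] FA' by blast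
      show "span F \<inter> A' \<subseteq> F" using AF Rnot by blast
    qed
    have Flat: "F \<subseteq> lattice_pts" using fok_lat[OF fokF] .
    have "inj_on (bar_pi (span F)) R"
    proof (rule inj_onI, rule ccontr)
      fix x y assume x: "x \<in> R" and y: "y \<in> R" and eq: "bar_pi (span F) x = bar_pi (span F) y"
        and ne: "x \<noteq> y"
      have xl: "x \<in> lattice_pts" "x \<notin> span F" using x Sd(2) primitive_lat Rnot R_def by auto
      have yl: "y \<in> lattice_pts" "y \<notin> span F" using y Sd(2) primitive_lat Rnot R_def by auto
      obtain s where s: "s > 0" "x - s *\<^sub>R y \<in> span F" using bar_pi_eq[OF Flat xl yl eq] by blast
      have "x - s *\<^sub>R y \<in> span F1" using s(2) spF1 by simp
      moreover have "F1 \<subseteq> S - {x, y}" using x y F1S R_def by blast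
      moreover have "x \<in> S" "y \<in> S" using x y R_def by auto
      ultimately show False using simplex_G[OF S _ _ ne, of s F1] s(1) by auto
    qed
    then have "gd F A'" unfolding gd_def AF using finA' primA' posA' eqA' by blast
    then have M': "mori_fiber_pgs (F, A')" using fokF mori_iff by blast
    have "card A' = CARD('n) + 2" using Sd f0S A'_def by simp
    then have c2: "cn (F, A') (S, S)" using link_M3[OF M' _ _ S] A'_def by auto
    have "cn (F, A) (F, A')" by (rule fixed_fiber_conn[OF M M'])
    then show ?thesis using c2 cn_trans S by blast
  qed
qed

lemma smp_conn:
  fixes S T :: "(real^'n) set"
  assumes d: "CARD('n) \<ge> 2" and S: "smp S" and T: "smp T" and B: "Basis \<subseteq> T"
  shows "cn (S, S) (T, T)"
proof -
  obtain s where s: "s \<in> S" using simplex_nonempty[OF S] by blast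
  have sp: "primitive s" using S s smp_iff by auto
  have ind: "independent {s}" using primitive_nz[OF sp] by (simp add: independent_insert)
  obtain Bs where Bs: "{s} \<subseteq> Bs" "Bs \<subseteq> {s} \<union> Basis" "independent Bs" "{s} \<union> Basis \<subseteq> span Bs"
    using maximal_independent_subset_extend[OF _ ind, of "{s} \<union> Basis"] by blast
  have spBs: "span Bs = UNIV" using Bs(4) by (metis span_Basis span_mono span_span le_sup_iff top.extremum_uniqueI)
  have finBs: "finite Bs" using Bs(3) independent_imp_finite by blast
  have card: "card Bs = CARD('n)" using basis_card_eq_dim[of Bs UNIV] Bs(3) spBs by simp
  have "card (Bs - {s}) = card Bs - 1" using Bs(1) by (simp add: card_Diff_singleton)
  then have "card (Bs - {s}) > 0" using card d by simp
  then obtain e where e: "e \<in> Bs" "e \<noteq> s" by (metis card.empty all_not_in_conv less_irrefl DiffE insertI1)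
  have eB: "e \<in> Basis" using e Bs(2) by blast
  have prBs: "\<forall>b\<in>Bs. primitive b" using Bs(2) sp primitive_Basis by blast
  obtain p where "p \<notin> Bs" and S2: "smp (insert p Bs)" using simp_of[OF Bs(3) spBs prBs] by blast
  have c1: "cn (S, S) (insert p Bs, insert p Bs)" using pivot[OF d S S2 s] Bs(1) by blast
  have c2: "cn (insert p Bs, insert p Bs) (T, T)" using pivot[OF d S2 T, of e] e eB B by blast
  show ?thesis using cn_trans[OF c1 c2] .
qed

lemma d1_prim:
  fixes x :: "real^'n"
  assumes d: "CARD('n) = 1" and x: "primitive x"
  shows "x = axis i 1 \<or> x = - axis i 1"
proof -
  have all: "j = i" for j :: 'n
  proof -
    obtain a where "(UNIV :: 'n set) = {a}" using d card_1_singletonE by blast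
    then show ?thesis by (metis UNIV_I singletonD)
  qed
  have xe: "x = (x $ i) *\<^sub>R axis i 1"
    unfolding vec_eq_iff
  proof
    fix j :: 'n
    have "j = i" by (rule all)
    then show "x $ j = ((x $ i) *\<^sub>R axis i 1) $ j" by (simp add: axis_def)
  qed
  have "x $ i \<in> \<int>" using primitive_lat[OF x] unfolding lattice_pts_def by blast
  then obtain z where z: "x $ i = of_int z" by (auto elim: Ints_cases)
  have "z \<noteq> 0" using primitive_nz[OF x] xe z by auto
  moreover have "\<not> z \<ge> 2"
  proof
    assume "z \<ge> 2"
    moreover have "x = of_int z *\<^sub>R axis i 1" using xe z by simp
    ultimately show False using x lat_axis unfolding primitive_def by blast
  qed
  moreover have "\<not> z \<le> -2"
  proof
    assume "z \<le> -2"
    then have "- z \<ge> 2" by simp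
    moreover have "x = of_int (- z) *\<^sub>R (- axis i 1)" using xe z by simp
    moreover have "- axis i 1 \<in> lattice_pts" using lat_axis lat_minus by blast
    ultimately show False using x unfolding primitive_def by blast
  qed
  ultimately have "z = 1 \<or> z = -1" by linarith
  then show ?thesis using xe z by auto
qed

lemma d1_smp:
  fixes S :: "(real^'n) set"
  assumes d: "CARD('n) = 1" and S: "smp S"
  shows "S = {axis i 1, - axis i 1}"
proof -
  have Sd: "finite S" "\<forall>x\<in>S. primitive x" "card S = CARD('n) + 1" using S smp_iff by auto
  have sub: "S \<subseteq> {axis i 1, - axis i 1}" using Sd(2) d1_prim[OF d] by blast
  have ne: "axis i (1::real) \<noteq> - axis i 1" using neq_neg[of "axis i (1::real)"] by (simp add: axis_eq_0_iff)
  have "card S = card {axis i (1::real), - axis i 1}" using Sd(3) d ne by simp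
  then show ?thesis using card_subset_eq[OF _ sub] by simp
qed

theorem main:
  fixes Af A Af' A' :: "(real^'n) set"
  assumes "mori_fiber_pgs (Af, A)" and "mori_fiber_pgs (Af', A')"
  shows "\<exists>xs. links_sequence xs \<and> hd xs = (Af, A) \<and> last xs = (Af', A')"
proof -
  obtain S1 where S1: "smp S1" "cn (Af, A) (S1, S1)" using mori_to_smp[OF assms(1)] by blast
  obtain S2 where S2: "smp S2" "cn (Af', A') (S2, S2)" using mori_to_smp[OF assms(2)] by blast
  have "cn (S1, S1) (S2, S2)"
  proof (cases "CARD('n) \<ge> 2")
    case True
    obtain p where "p \<notin> (Basis :: (real^'n) set)" and T: "smp (insert p Basis)"
      using simp_of[OF independent_Basis span_Basis] primitive_Basis by blast
    have "cn (S1, S1) (insert p Basis, insert p Basis)" by (rule smp_conn[OF True S1(1) T]) blast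
    moreover have "cn (S2, S2) (insert p Basis, insert p Basis)" by (rule smp_conn[OF True S2(1) T]) blast
    ultimately show ?thesis using cn_sym cn_trans by blast
  next
    case False
    then have d: "CARD('n) = 1" using zero_less_card_finite[where 'a='n] by linarith
    have "S1 = S2" using d1_smp[OF d S1(1), of undefined] d1_smp[OF d S2(1), of undefined] by simp
    then show ?thesis using cn_refl simplex_mori[OF S1(1)] by simp
  qed
  then have "cn (Af, A) (Af', A')" using S1(2) cn_sym[OF S2(2)] cn_trans by blast
  then show ?thesis by (rule cn_conn)
qed


theorem corollary3p2:
  fixes Af A Af' A' :: "(real^'n) set"
  assumes "mori_fiber_pgs (Af, A)" and "mori_fiber_pgs (Af', A')"
  shows "\<exists>xs. links_sequence xs \<and> hd xs = (Af, A) \<and> last xs = (Af', A')"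
  using main[OF assms] .

end
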